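(* For $n\geqslant1$, $m,f\geqslant0$ let $\mathfrak{l}_{n,m,f}$ be the number of inversion sequences $\sigma$ of length $n$ avoiding both $010$ and $110$, with maximum value $m$ and $\mathrm{forb}(\sigma,\{010,110\})=f$. Then for all $n\geqslant1$, $m\geqslant1$, $f\geqslant0$, $$\mathfrak{l}_{n,m,f}=\sum_{p=m+1}^{n}\sum_{i=0}^{f-1}\sum_{j=0}^{m-1}\mathfrak{l}_{p-1,j,i}\cdot\Bigl(\mathfrak{j}_{n-p,\,m-i,\,f-i-1}+\delta_{f,m+1}\sum_{\ell=0}^{n-p-1}\mathfrak{k}_{\ell,\,m-i}\Bigr),$$ where $\mathfrak{j}_{a,b,c}$ is the number of words of length $a$ over $\{0,\dots,b-1\}$ avoiding $010$ and $110$ with $\mathrm{forb}=c$ (the empty word having $\mathrm{forb}=0$), and $\mathfrak{k}_{a,b}$ is the number of words of length $a$ over $\{0,\dots,b-1\}$ avoiding $010$ and $110$.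
   Context: $\delta_{a,b}$ is the Kronecker delta. An inversion sequence of length $n$ is a sequence $(\sigma_1,\dots,\sigma_n)$ of integers with $0\leqslant\sigma_i<i$. A sequence contains a pattern $p$ if some subsequence is order-isomorphic to $p$; otherwise it avoids $p$. Avoiding $010$: no $i<j<l$ with $\sigma_i=\sigma_l<\sigma_j$. Avoiding $110$: no $i<j<l$ with $\sigma_i=\sigma_j>\sigma_l$. For a nonempty sequence $\sigma$ avoiding a set of patterns $P$, a value $v\in\{0,\dots,\max(\sigma)\}$ is forbidden if $\sigma$ followed by $M$ and then $v$ contains some pattern of $P$, where $M>\max(\sigma)$; $\mathrm{forb}(\sigma,P)$ is the number of forbidden values. *)

theory Defs
  imports Main
begin

definition contains_010 :: "nat list \<Rightarrow> bool" where
  "contains_010 s \<longleftrightarrow> (\<exists>i j l. i < j \<and> j < l \<and> l < length s \<and>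
      s ! i = s ! l \<and> s ! l < s ! j)"

definition contains_110 :: "nat list \<Rightarrow> bool" where
  "contains_110 s \<longleftrightarrow> (\<exists>i j l. i < j \<and> j < l \<and> l < length s \<and>
      s ! i = s ! j \<and> s ! l < s ! j)"

definition avoids_010_110 :: "nat list \<Rightarrow> bool" where
  "avoids_010_110 s \<longleftrightarrow> \<not> contains_010 s \<and> \<not> contains_110 s"

text \<open>forb(s,{010,110}): number of v in {0..max s} such that s, M, v contains 010 or 110,
  where M = max s + 1 > max s. For the empty sequence it is 0 by convention.\<close>
definition forb :: "nat list \<Rightarrow> nat" where
  "forb s = (if s = [] then 0 else
     card {v \<in> {0..Max (set s)}. \<not> avoids_010_110 (s @ [Suc (Max (set s)), v])})"

definition is_inv_seq :: "nat \<Rightarrow> nat list \<Rightarrow> bool" where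
  "is_inv_seq n s \<longleftrightarrow> length s = n \<and> (\<forall>i < n. s ! i < i + 1)"

definition lcount :: "nat \<Rightarrow> nat \<Rightarrow> nat \<Rightarrow> nat" where
  "lcount n m f = card {s. is_inv_seq n s \<and> avoids_010_110 s \<and> s \<noteq> [] \<and>
      Max (set s) = m \<and> forb s = f}"

definition jcount :: "nat \<Rightarrow> nat \<Rightarrow> nat \<Rightarrow> nat" where
  "jcount a b c = card {w. length w = a \<and> set w \<subseteq> {0..<b} \<and> avoids_010_110 w \<and> forb w = c}"

definition kcount :: "nat \<Rightarrow> nat \<Rightarrow> nat" where
  "kcount a b = card {w. length w = a \<and> set w \<subseteq> {0..<b} \<and> avoids_010_110 w}"

end

theory Submission
  imports Defs
begin


definition Rep :: "nat list \<Rightarrow> nat set" where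
  "Rep s = {v. \<exists>i j. i < j \<and> j < length s \<and> s!i = s!j \<and> v < s!i}"
definition Fs :: "nat list \<Rightarrow> nat set" where "Fs s = set s \<union> Rep s"

lemma avoidsI:
  assumes "\<And>i j l. i<j \<Longrightarrow> j<l \<Longrightarrow> l<length s \<Longrightarrow> s!l < s!j \<Longrightarrow> s!i \<noteq> s!l \<and> s!i \<noteq> s!j"
  shows "avoids_010_110 s"
  using assms unfolding avoids_010_110_def contains_010_def contains_110_def by fastforce

lemma avoidsD1: "avoids_010_110 s \<Longrightarrow> i<j \<Longrightarrow> j<l \<Longrightarrow> l<length s \<Longrightarrow> s!i = s!l \<Longrightarrow> s!l < s!j \<Longrightarrow> False"
  unfolding avoids_010_110_def contains_010_def by blast
lemma avoidsD2: "avoids_010_110 s \<Longrightarrow> i<j \<Longrightarrow> j<l \<Longrightarrow> l<length s \<Longrightarrow> s!i = s!j \<Longrightarrow> s!l < s!j \<Longrightarrow> False"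
  unfolding avoids_010_110_def contains_110_def by blast

lemma avoids_appendD1: "avoids_010_110 (x@y) \<Longrightarrow> avoids_010_110 x"
proof (rule avoidsI)
  fix i j l assume a: "avoids_010_110 (x@y)" "i<j" "j<l" "l<length x" "x!l < x!j"
  show "x!i \<noteq> x!l \<and> x!i \<noteq> x!j"
    using avoidsD1[OF a(1), of i j l] avoidsD2[OF a(1), of i j l] a(2-5) by (auto simp: nth_append)
qed

lemma avoids_appendD2: "avoids_010_110 (x@y) \<Longrightarrow> avoids_010_110 y"
proof (rule avoidsI)
  fix i j l assume a: "avoids_010_110 (x@y)" "i<j" "j<l" "l<length y" "y!l < y!j"
  show "y!i \<noteq> y!l \<and> y!i \<noteq> y!j"
    using avoidsD1[OF a(1), of "length x + i" "length x + j" "length x + l"]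
      avoidsD2[OF a(1), of "length x + i" "length x + j" "length x + l"] a(2-5) by (auto simp: nth_append)
qed

lemma avoids_append:
  assumes d: "set x \<inter> set y = {}"
  shows "avoids_010_110 (x@y) \<longleftrightarrow> avoids_010_110 x \<and> avoids_010_110 y \<and> set y \<inter> Rep x = {}"
proof
  assume a: "avoids_010_110 (x@y)"
  have "set y \<inter> Rep x = {}"
  proof (rule ccontr)
    assume "set y \<inter> Rep x \<noteq> {}"
    then obtain v where v1: "v \<in> set y" and v2: "v \<in> Rep x" by blast
    from v1 obtain l where "l < length y" "y!l = v" by (auto simp: in_set_conv_nth)
    moreover from v2 obtain i j where "i<j" "j<length x" "x!i = x!j" "v < x!i"
      unfolding Rep_def by blast
    ultimately show False using avoidsD2[OF a, of i j "length x + l"] by (auto simp: nth_append)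
  qed
  then show "avoids_010_110 x \<and> avoids_010_110 y \<and> set y \<inter> Rep x = {}"
    using avoids_appendD1[OF a] avoids_appendD2[OF a] by blast
next
  assume a: "avoids_010_110 x \<and> avoids_010_110 y \<and> set y \<inter> Rep x = {}"
  show "avoids_010_110 (x@y)"
  proof (rule avoidsI)
    fix i j l assume b: "i<j" "j<l" "l<length (x@y)" "(x@y)!l < (x@y)!j"
    show "(x@y)!i \<noteq> (x@y)!l \<and> (x@y)!i \<noteq> (x@y)!j"
    proof (cases "l < length x")
      case True
      then show ?thesis using b avoidsD1[of x i j l] avoidsD2[of x i j l] a by (auto simp: nth_append)
    next
      case l: False
      show ?thesis
      proof (cases "length x \<le> i")
        case True
        have c: "i - length x < j - length x" "j - length x < l - length x" "l - length x < length y"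
          using b l True by auto
        have e: "(x@y)!i = y!(i - length x)" "(x@y)!j = y!(j - length x)" "(x@y)!l = y!(l - length x)"
          using b l True by (auto simp: nth_append)
        show ?thesis using b(4) avoidsD1[OF _ c, of] avoidsD2[OF _ c] a unfolding e by blast
      next
        case i: False
        have yl: "(x@y)!l \<in> set y" using l b by (auto simp: nth_append)
        have xi: "(x@y)!i \<in> set x" using i b by (auto simp: nth_append)
        have 1: "(x@y)!i \<noteq> (x@y)!l" using yl xi d by auto
        have 2: "(x@y)!i \<noteq> (x@y)!j"
        proof
          assume e: "(x@y)!i = (x@y)!j"
          show False
          proof (cases "j < length x")
            case True
            then have "i<j" "j<length x" "x!i = x!j" "(x@y)!l < x!i" using b i e by (auto simp: nth_append)
            then have "(x@y)!l \<in> Rep x" unfolding Rep_def by blast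
            then show False using yl a by auto
          next
            case False
            then have "(x@y)!j \<in> set y" using b by (auto simp: nth_append)
            then show False using e xi d by auto
          qed
        qed
        show ?thesis using 1 2 by blast
      qed
    qed
  qed
qed

lemma Rep_append:
  assumes d: "set x \<inter> set y = {}"
  shows "Rep (x@y) = Rep x \<union> Rep y"
proof
  show "Rep x \<union> Rep y \<subseteq> Rep (x@y)"
  proof
    fix v assume "v \<in> Rep x \<union> Rep y"
    then show "v \<in> Rep (x@y)"
    proof
      assume "v \<in> Rep x"
      then obtain i j where "i<j" "j<length x" "x!i=x!j" "v<x!i" unfolding Rep_def by blast
      then have "i<j" "j<length (x@y)" "(x@y)!i=(x@y)!j" "v<(x@y)!i" by (auto simp: nth_append)
      then show ?thesis unfolding Rep_def by blast
    next
      assume "v \<in> Rep y"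
      then obtain i j where "i<j" "j<length y" "y!i=y!j" "v<y!i" unfolding Rep_def by blast
      then have "length x + i<length x + j" "length x + j<length (x@y)" "(x@y)!(length x + i)=(x@y)!(length x + j)" "v<(x@y)!(length x + i)" by (auto simp: nth_append)
      then show ?thesis unfolding Rep_def by blast
    qed
  qed
next
  show "Rep (x@y) \<subseteq> Rep x \<union> Rep y"
  proof
    fix v assume "v \<in> Rep (x@y)"
    then obtain i j where ij: "i<j" "j<length (x@y)" "(x@y)!i=(x@y)!j" "v<(x@y)!i" unfolding Rep_def by blast
    show "v \<in> Rep x \<union> Rep y"
    proof (cases "j < length x")
      case True
      then have "i<j" "j<length x" "x!i=x!j" "v<x!i" using ij by (auto simp: nth_append)
      then have "v \<in> Rep x" unfolding Rep_def by blast
      then show ?thesis by blast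
    next
      case j: False
      show ?thesis
      proof (cases "i < length x")
        case True
        then have "(x@y)!i \<in> set x" "(x@y)!j \<in> set y" using ij(2) j by (auto simp: nth_append)
        then show ?thesis using ij d by auto
      next
        case False
        then have "i - length x < j - length x" "j - length x < length y"
          "y!(i - length x) = y!(j - length x)" "v < y!(i - length x)" using ij j by (auto simp: nth_append)
        then have "v \<in> Rep y" unfolding Rep_def by blast
        then show ?thesis by blast
      qed
    qed
  qed
qed

lemma Fs_sub: "s \<noteq> [] \<Longrightarrow> Fs s \<subseteq> {0..Max (set s)}"
proof
  fix v assume v: "v \<in> Fs s"
  show "v \<in> {0..Max (set s)}"
  proof (cases "v \<in> set s")
    case True then show ?thesis by simp
  next
    case False
    then obtain i j where "i<j" "j<length s" "v < s!i" using v unfolding Fs_def Rep_def by blast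
    moreover have "s!i \<le> Max (set s)" using \<open>i<j\<close> \<open>j<length s\<close> by simp
    ultimately show ?thesis by (simp add: order_less_imp_le order_less_le_trans)
  qed
qed

lemma Fs_mono: "Fs x \<subseteq> Fs (x@y)"
proof
  fix v assume v: "v \<in> Fs x"
  show "v \<in> Fs (x@y)"
  proof (cases "v \<in> set x")
    case True then show ?thesis unfolding Fs_def by simp
  next
    case False
    then obtain i j where "i<j" "j<length x" "x!i = x!j" "v < x!i" using v unfolding Fs_def Rep_def by blast
    then have "i<j" "j<length (x@y)" "(x@y)!i = (x@y)!j" "v < (x@y)!i" by (auto simp: nth_append)
    then show ?thesis unfolding Fs_def Rep_def by blast
  qed
qed

lemma forb_Fs:
  assumes a: "avoids_010_110 s"
  shows "forb s = card (Fs s)"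
proof (cases "s = []")
  case True then show ?thesis by (simp add: forb_def Fs_def Rep_def)
next
  case ne: False
  define M where "M = Max (set s)"
  have le: "\<And>k. k < length s \<Longrightarrow> s!k \<le> M" unfolding M_def by simp
  have "{v \<in> {0..M}. \<not> avoids_010_110 (s @ [Suc M, v])} = Fs s"
  proof (intro set_eqI iffI)
    fix v assume "v \<in> {v \<in> {0..M}. \<not> avoids_010_110 (s @ [Suc M, v])}"
    then have vM: "v \<le> M" and na: "\<not> avoids_010_110 (s @ [Suc M, v])" by auto
    obtain i j l where ijl: "i<j" "j<l" "l<length (s@[Suc M, v])"
       and pat: "(s@[Suc M,v])!l < (s@[Suc M,v])!j"
       and eq: "(s@[Suc M,v])!i = (s@[Suc M,v])!l \<or> (s@[Suc M,v])!i = (s@[Suc M,v])!j"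
      using na avoidsI by blast
    consider "l < length s" | "l = length s" | "l = Suc (length s)" using ijl(3) by fastforce
    then show "v \<in> Fs s"
    proof cases
      case 1
      then show ?thesis using ijl pat eq avoidsD1[OF a, of i j l] avoidsD2[OF a, of i j l]
        by (auto simp: nth_append)
    next
      case 2
      then show ?thesis using ijl pat le[of j] by (auto simp: nth_append)
    next
      case 3
      show ?thesis
      proof (cases "(s@[Suc M,v])!i = (s@[Suc M,v])!l")
        case True
        have "i < length s" using ijl 3 by auto
        then show ?thesis using True 3 unfolding Fs_def by (auto simp: nth_append)
      next
        case False
        then have e: "(s@[Suc M,v])!i = (s@[Suc M,v])!j" using eq by blast
        have jl: "j \<le> length s" using ijl 3 by auto
        show ?thesis
        proof (cases "j = length s")
          case True
          then show ?thesis using e ijl le[of i] by (auto simp: nth_append)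
        next
          case False
          then have jj: "j < length s" using jl by auto
          then have "i<j" "j<length s" "s!i=s!j" "v<s!i" using e ijl pat 3 by (auto simp: nth_append)
          then have "v \<in> Rep s" unfolding Rep_def by blast
          then show ?thesis unfolding Fs_def by blast
        qed
      qed
    qed
  next
    fix v assume v: "v \<in> Fs s"
    have "v \<le> M" using Fs_sub[OF ne] v M_def by auto
    moreover have "\<not> avoids_010_110 (s @ [Suc M, v])"
    proof
      assume a2: "avoids_010_110 (s @ [Suc M, v])"
      show False
      proof (cases "v \<in> set s")
        case True
        then obtain i where "i < length s" "s!i = v" by (auto simp: in_set_conv_nth)
        then show False using avoidsD1[OF a2, of i "length s" "Suc (length s)"] `v \<le> M`
          by (auto simp: nth_append)
      next
        case False
        then obtain i j where "i<j" "j<length s" "s!i=s!j" "v<s!i" using v unfolding Fs_def Rep_def by blast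
        then show False using avoidsD2[OF a2, of i j "Suc (length s)"] by (auto simp: nth_append)
      qed
    qed
    ultimately show "v \<in> {v \<in> {0..M}. \<not> avoids_010_110 (s @ [Suc M, v])}" by auto
  qed
  then show ?thesis unfolding forb_def M_def using ne by simp
qed



lemma map_avoid:
  assumes mono: "\<And>x y. x \<in> S \<Longrightarrow> y \<in> S \<Longrightarrow> x < y \<Longrightarrow> \<phi> x < (\<phi> y::nat)"
    and w: "set w \<subseteq> (S::nat set)"
  shows "avoids_010_110 (map \<phi> w) \<longleftrightarrow> avoids_010_110 w"
proof -
  have lt: "\<phi> x < \<phi> y \<longleftrightarrow> x < y" if "x \<in> S" "y \<in> S" for x y
    using mono[OF that] mono[OF that(2,1)] by (metis less_asym linorder_neqE_nat)
  have eq: "\<phi> x = \<phi> y \<longleftrightarrow> x = y" if "x \<in> S" "y \<in> S" for x y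
    using mono[OF that] mono[OF that(2,1)] by (metis less_irrefl linorder_neqE_nat)
  have inS: "k < length w \<Longrightarrow> w!k \<in> S" for k using w nth_mem by blast
  have c1: "contains_010 (map \<phi> w) \<longleftrightarrow> contains_010 w"
  proof -
    have "\<forall>i j l. i<j \<and> j<l \<and> l<length w \<longrightarrow> ((map \<phi> w!i = map \<phi> w!l \<and> map \<phi> w!l < map \<phi> w!j) \<longleftrightarrow> (w!i = w!l \<and> w!l < w!j))"
      by (auto simp: lt eq inS)
    then show ?thesis unfolding contains_010_def length_map by meson
  qed
  have c2: "contains_110 (map \<phi> w) \<longleftrightarrow> contains_110 w"
  proof -
    have "\<forall>i j l. i<j \<and> j<l \<and> l<length w \<longrightarrow> ((map \<phi> w!i = map \<phi> w!j \<and> map \<phi> w!l < map \<phi> w!j) \<longleftrightarrow> (w!i = w!j \<and> w!l < w!j))"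
      by (auto simp: lt eq inS)
    then show ?thesis unfolding contains_110_def length_map by meson
  qed
  show ?thesis unfolding avoids_010_110_def c1 c2 ..
qed

lemma Fs_bound: "set w \<subseteq> {0..<k} \<Longrightarrow> Fs w \<subseteq> {0..<k}"
  unfolding Fs_def Rep_def by auto (meson atLeastLessThan_iff dual_order.strict_trans nth_mem subsetD)

lemma map_Fs:
  assumes mono: "\<And>x y. x \<in> S \<Longrightarrow> y \<in> S \<Longrightarrow> x < y \<Longrightarrow> \<phi> x < (\<phi> y::nat)"
    and img: "\<phi> ` S = A"
    and w: "set w \<subseteq> (S::nat set)" and RS: "Rep w \<subseteq> S"
  shows "Fs (map \<phi> w) \<inter> A = \<phi> ` Fs w"
proof -
  have lt: "\<phi> x < \<phi> y \<longleftrightarrow> x < y" if "x \<in> S" "y \<in> S" for x y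
    using mono[OF that] mono[OF that(2,1)] by (metis less_asym linorder_neqE_nat)
  have eq: "\<phi> x = \<phi> y \<longleftrightarrow> x = y" if "x \<in> S" "y \<in> S" for x y
    using mono[OF that] mono[OF that(2,1)] by (metis less_irrefl linorder_neqE_nat)
  have inS: "k < length w \<Longrightarrow> w!k \<in> S" for k using w nth_mem by blast
  have s: "set (map \<phi> w) \<inter> A = \<phi> ` set w" using w img by auto
  have r: "Rep (map \<phi> w) \<inter> A = \<phi> ` Rep w"
  proof (intro set_eqI iffI)
    fix u assume "u \<in> Rep (map \<phi> w) \<inter> A"
    then obtain i j where ij: "i<j" "j<length w" "\<phi> (w!i) = \<phi> (w!j)" "u < \<phi> (w!i)" and uA: "u \<in> A"
      unfolding Rep_def by auto
    from uA obtain t where t: "t \<in> S" "u = \<phi> t" unfolding img[symmetric] by blast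
    have iS: "w!i \<in> S" "w!j \<in> S" using ij inS by auto
    have "w!i = w!j" using ij(3) eq[OF iS] by simp
    moreover have "t < w!i" using lt[OF t(1) inS[of i]] ij t by auto
    ultimately have "t \<in> Rep w" unfolding Rep_def using ij by blast
    then show "u \<in> \<phi> ` Rep w" using t by auto
  next
    fix u assume "u \<in> \<phi> ` Rep w"
    then obtain t where t: "t \<in> Rep w" "u = \<phi> t" by auto
    then obtain i j where ij: "i<j" "j<length w" "w!i = w!j" "t < w!i" unfolding Rep_def by blast
    have tS: "t \<in> S" using t RS by auto
    have "\<phi> t < \<phi> (w!i)" using mono[OF tS inS[of i]] ij by auto
    then have "i<j" "j<length (map \<phi> w)" "map \<phi> w!i = map \<phi> w!j" "u < map \<phi> w!i" using ij t by auto
    then have "u \<in> Rep (map \<phi> w)" unfolding Rep_def by blast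
    moreover have "u \<in> A" using tS t unfolding img[symmetric] by blast
    ultimately show "u \<in> Rep (map \<phi> w) \<inter> A" by blast
  qed
  show ?thesis unfolding Fs_def using s r by (simp add: Int_Un_distrib2 image_Un)
qed

lemma relabel:
  fixes A :: "nat set" assumes fin: "finite A"
  shows "card {b. length b = L \<and> set b \<subseteq> A \<and> avoids_010_110 b \<and> card (Fs b \<inter> A) = c} = jcount L (card A) c"
    and "card {b. length b = L \<and> set b \<subseteq> A \<and> avoids_010_110 b} = kcount L (card A)"
proof -
  define xs where "xs = sorted_list_of_set A"
  define \<phi> where "\<phi> = (\<lambda>k. xs ! k)"
  define S where "S = {0..<card A}"
  have len: "length xs = card A" unfolding xs_def by simp
  have sxs: "set xs = A" unfolding xs_def using fin by simp
  have sw: "sorted_wrt (<) xs" unfolding xs_def by simp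
  have mono: "\<And>x y. x \<in> S \<Longrightarrow> y \<in> S \<Longrightarrow> x < y \<Longrightarrow> \<phi> x < \<phi> y"
    unfolding \<phi>_def S_def using sw len by (auto intro: sorted_wrt_nth_less)
  have img: "\<phi> ` S = A"
  proof -
    have "(!) xs ` {0..<card A} = set (take (card A) xs)" by (rule nth_image) (simp add: len)
    then show ?thesis unfolding \<phi>_def S_def using len sxs by simp
  qed
  have inj: "inj_on \<phi> S" using mono by (metis inj_onI less_irrefl linorder_neqE_nat)
  have main: "{b. length b = L \<and> set b \<subseteq> A \<and> P b} = map \<phi> ` {w. length w = L \<and> set w \<subseteq> S \<and> P (map \<phi> w)}"
    for P
  proof (intro set_eqI iffI)
    fix b assume b: "b \<in> {b. length b = L \<and> set b \<subseteq> A \<and> P b}"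
    define w where "w = map (inv_into S \<phi>) b"
    have "map \<phi> w = b" unfolding w_def using b img by (auto simp: map_idI f_inv_into_f intro!: map_idI)
    moreover have "set w \<subseteq> S" unfolding w_def using b img by (auto intro: inv_into_into)
    moreover have "length w = L" using b unfolding w_def by simp
    ultimately have "w \<in> {w. length w = L \<and> set w \<subseteq> S \<and> P (map \<phi> w)}" using b by simp
    then have "map \<phi> w \<in> map \<phi> ` {w. length w = L \<and> set w \<subseteq> S \<and> P (map \<phi> w)}"
      by (rule imageI)
    then show "b \<in> map \<phi> ` {w. length w = L \<and> set w \<subseteq> S \<and> P (map \<phi> w)}"
      unfolding \<open>map \<phi> w = b\<close> .
  next
    fix b assume "b \<in> map \<phi> ` {w. length w = L \<and> set w \<subseteq> S \<and> P (map \<phi> w)}"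
    then obtain w where w: "b = map \<phi> w" "length w = L" "set w \<subseteq> S" "P (map \<phi> w)" by blast
    have "set b \<subseteq> A" using w(1,3) img by (simp add: image_mono flip: img)
    then show "b \<in> {b. length b = L \<and> set b \<subseteq> A \<and> P b}" using w by simp
  qed
  have injm: "inj_on (map \<phi>) {w. length w = L \<and> set w \<subseteq> S \<and> Q w}" for Q
    by (rule inj_on_mapI) (use inj in \<open>auto intro: inj_on_subset\<close>)
  have RS: "set w \<subseteq> S \<Longrightarrow> Rep w \<subseteq> S" for w using Fs_bound[of w "card A"] unfolding S_def Fs_def by auto
  have FsS: "set w \<subseteq> S \<Longrightarrow> Fs w \<subseteq> S" for w using Fs_bound[of w "card A"] unfolding S_def by auto
  have e1: "{w. length w = L \<and> set w \<subseteq> S \<and> (avoids_010_110 (map \<phi> w) \<and> card (Fs (map \<phi> w) \<inter> A) = c)}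
     = {w. length w = L \<and> set w \<subseteq> {0..<card A} \<and> avoids_010_110 w \<and> forb w = c}"
  proof -
    have iff: "(avoids_010_110 (map \<phi> w) \<and> card (Fs (map \<phi> w) \<inter> A) = c) \<longleftrightarrow>
       (avoids_010_110 w \<and> forb w = c)" if w: "set w \<subseteq> S" for w
    proof -
      have "card (Fs (map \<phi> w) \<inter> A) = card (Fs w)"
        using map_Fs[OF mono img w RS[OF w]] card_image[OF inj_on_subset[OF inj FsS[OF w]]] by simp
      then show ?thesis using map_avoid[OF mono w] forb_Fs by auto
    qed
    show ?thesis
    proof (rule Collect_cong)
      fix w show "(length w = L \<and> set w \<subseteq> S \<and> (avoids_010_110 (map \<phi> w) \<and> card (Fs (map \<phi> w) \<inter> A) = c)) =
          (length w = L \<and> set w \<subseteq> {0..<card A} \<and> avoids_010_110 w \<and> forb w = c)"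
      proof (cases "set w \<subseteq> S")
        case True then show ?thesis using iff[OF True] S_def by simp
      next
        case False then show ?thesis using S_def by simp
      qed
    qed
  qed
  show "card {b. length b = L \<and> set b \<subseteq> A \<and> avoids_010_110 b \<and> card (Fs b \<inter> A) = c} = jcount L (card A) c"
  proof -
    have "card {b. length b = L \<and> set b \<subseteq> A \<and> avoids_010_110 b \<and> card (Fs b \<inter> A) = c}
      = card (map \<phi> ` {w. length w = L \<and> set w \<subseteq> S \<and> (avoids_010_110 (map \<phi> w) \<and> card (Fs (map \<phi> w) \<inter> A) = c)})"
      using main[of "\<lambda>b. avoids_010_110 b \<and> card (Fs b \<inter> A) = c"] by simp
    also have "\<dots> = card {w. length w = L \<and> set w \<subseteq> S \<and> (avoids_010_110 (map \<phi> w) \<and> card (Fs (map \<phi> w) \<inter> A) = c)}"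
      by (rule card_image[OF injm])
    also have "\<dots> = jcount L (card A) c" unfolding e1 jcount_def ..
    finally show ?thesis .
  qed
  have e2: "{w. length w = L \<and> set w \<subseteq> S \<and> avoids_010_110 (map \<phi> w)}
     = {w. length w = L \<and> set w \<subseteq> {0..<card A} \<and> avoids_010_110 w}"
  proof (rule Collect_cong)
    fix w show "(length w = L \<and> set w \<subseteq> S \<and> avoids_010_110 (map \<phi> w)) =
          (length w = L \<and> set w \<subseteq> {0..<card A} \<and> avoids_010_110 w)"
    proof (cases "set w \<subseteq> S")
      case True then show ?thesis using map_avoid[OF mono True] S_def by simp
    next
      case False then show ?thesis using S_def by simp
    qed
  qed
  show "card {b. length b = L \<and> set b \<subseteq> A \<and> avoids_010_110 b} = kcount L (card A)"
  proof -
    have "card {b. length b = L \<and> set b \<subseteq> A \<and> avoids_010_110 b}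
      = card (map \<phi> ` {w. length w = L \<and> set w \<subseteq> S \<and> avoids_010_110 (map \<phi> w)})"
      using main[of "\<lambda>b. avoids_010_110 b"] by simp
    also have "\<dots> = card {w. length w = L \<and> set w \<subseteq> S \<and> avoids_010_110 (map \<phi> w)}"
      by (rule card_image[OF injm])
    also have "\<dots> = kcount L (card A)" unfolding e2 kcount_def ..
    finally show ?thesis .
  qed
qed



lemma avoids_single: "avoids_010_110 [x]" by (rule avoidsI) auto
lemma Rep_single: "Rep [x] = {}" unfolding Rep_def by auto

lemma Rep_lt: "\<forall>v\<in>set a. v < (m::nat) \<Longrightarrow> Rep a \<subseteq> {0..<m}"
  unfolding Rep_def by auto (meson nth_mem order.strict_trans)

lemma avoids_rep:
  assumes a: "avoids_010_110 xs" and le: "\<forall>v\<in>set xs. v \<le> M"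
  shows "avoids_010_110 (xs @ replicate k M)"
proof (rule avoidsI)
  fix i j l assume h: "i<j" "j<l" "l<length (xs @ replicate k M)"
    "(xs @ replicate k M)!l < (xs @ replicate k M)!j"
  have jle: "(xs @ replicate k M)!j \<le> M" using h le by (auto simp: nth_append)
  show "(xs @ replicate k M)!i \<noteq> (xs @ replicate k M)!l \<and> (xs @ replicate k M)!i \<noteq> (xs @ replicate k M)!j"
  proof (cases "l < length xs")
    case True
    then have e: "(xs @ replicate k M)!i = xs!i" "(xs @ replicate k M)!j = xs!j" "(xs @ replicate k M)!l = xs!l"
      using h by (auto simp: nth_append)
    show ?thesis using avoidsD1[OF a h(1,2) True] avoidsD2[OF a h(1,2) True] h(4) unfolding e by blast
  next
    case False
    then have "(xs @ replicate k M)!l = M" using h by (auto simp: nth_append)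
    then show ?thesis using h(4) jle by simp
  qed
qed

lemma avoids_two_M:
  assumes a: "avoids_010_110 (x @ M # y @ M # z)" and v: "v \<in> set z" "v < M"
  shows False
proof -
  obtain k where k: "k < length z" "z!k = v" using v by (auto simp: in_set_conv_nth)
  show False using avoidsD2[OF a, of "length x" "length x + Suc (length y)" "length x + Suc (length y) + Suc k"]
    k v by (simp add: nth_append)
qed

lemma Fs_full:
  assumes le: "\<forall>v\<in>set (x @ M # y @ M # z). v \<le> M"
  shows "Fs (x @ M # y @ M # z) = {0..M}"
proof
  have "Max (set (x @ M # y @ M # z)) = M" using le by (intro Max_eqI) auto
  then show "Fs (x @ M # y @ M # z) \<subseteq> {0..M}" using Fs_sub[of "x @ M # y @ M # z"] by simp
next
  show "{0..M} \<subseteq> Fs (x @ M # y @ M # z)"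
  proof
    fix v assume "v \<in> {0..M}"
    then have "v \<le> M" by simp
    show "v \<in> Fs (x @ M # y @ M # z)"
    proof (cases "v = M")
      case True then show ?thesis unfolding Fs_def by simp
    next
      case False
      then have "v < M" using \<open>v \<le> M\<close> by simp
      then have "length x < length x + Suc (length y)" "length x + Suc (length y) < length (x @ M # y @ M # z)"
        "(x @ M # y @ M # z)!(length x) = (x @ M # y @ M # z)!(length x + Suc (length y))"
        "v < (x @ M # y @ M # z)!(length x)" by (auto simp: nth_append)
      then have "v \<in> Rep (x @ M # y @ M # z)" unfolding Rep_def by blast
      then show ?thesis unfolding Fs_def by blast
    qed
  qed
qed

lemma char1:
  assumes a: "avoids_010_110 a" and am: "\<forall>v\<in>set a. v < m"
    and b: "set b \<subseteq> {0..m}" "m \<notin> set b"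
  shows "avoids_010_110 (a@m#b) \<longleftrightarrow> set b \<subseteq> {0..<m} - Fs a \<and> avoids_010_110 b"
proof
  assume h: "avoids_010_110 (a@m#b)"
  have disj: "set a \<inter> set b = {}"
  proof (rule ccontr)
    assume "set a \<inter> set b \<noteq> {}"
    then obtain v where v: "v \<in> set a" "v \<in> set b" by blast
    obtain i where i: "i < length a" "a!i = v" using v(1) by (auto simp: in_set_conv_nth)
    obtain l where l: "l < length b" "b!l = v" using v(2) by (auto simp: in_set_conv_nth)
    have "v < m" using am v by auto
    then show False using avoidsD1[OF h, of i "length a" "length a + Suc l"] i l by (simp add: nth_append)
  qed
  have d2: "set a \<inter> set (m#b) = {}" using disj am by auto
  from h have h2: "avoids_010_110 (m#b)" "set (m#b) \<inter> Rep a = {}" using avoids_append[OF d2] by auto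
  have "avoids_010_110 b" using avoids_appendD2[of "[m]" b] h2(1) by simp
  moreover have "set b \<subseteq> {0..<m} - Fs a" using b disj h2(2) unfolding Fs_def by fastforce
  ultimately show "set b \<subseteq> {0..<m} - Fs a \<and> avoids_010_110 b" by blast
next
  assume h: "set b \<subseteq> {0..<m} - Fs a \<and> avoids_010_110 b"
  have "avoids_010_110 ([m]@b)"
    using avoids_append[of "[m]" b] b(2) avoids_single Rep_single h by auto
  then have mb: "avoids_010_110 (m#b)" by simp
  have d2: "set a \<inter> set (m#b) = {}" using h am unfolding Fs_def by auto
  have "set (m#b) \<inter> Rep a = {}" using h Rep_lt[OF am] unfolding Fs_def by auto
  then show "avoids_010_110 (a@m#b)" using avoids_append[OF d2] a mb by blast
qed

lemma Fs_concat:
  assumes "m \<notin> set a" "m \<notin> set b" "set a \<inter> set b = {}"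
  shows "Fs (a@m#b) = Fs a \<union> {m} \<union> Fs b"
proof -
  have "Rep (m#b) = Rep b" using Rep_append[of "[m]" b] assms Rep_single by simp
  moreover have "Rep (a@m#b) = Rep a \<union> Rep (m#b)" using Rep_append[of a "m#b"] assms by auto
  ultimately show ?thesis unfolding Fs_def by auto
qed

lemma forb_concat:
  assumes a: "avoids_010_110 a" and am: "\<forall>v\<in>set a. v < m"
    and b: "set b \<subseteq> {0..<m} - Fs a" "avoids_010_110 b"
  shows "forb (a@m#b) = card (Fs a) + 1 + card (Fs b \<inter> ({0..<m} - Fs a))"
proof -
  have bb: "set b \<subseteq> {0..m}" "m \<notin> set b" using b by auto
  have av: "avoids_010_110 (a@m#b)" using char1[OF a am bb] b by auto
  have Fsa: "Fs a \<subseteq> {0..<m}" using am Rep_lt[OF am] unfolding Fs_def by auto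
  have Fsb: "Fs b \<subseteq> {0..<m}" using Fs_bound[of b m] b by auto
  have "Fs (a@m#b) = Fs a \<union> {m} \<union> Fs b"
  proof (rule Fs_concat)
    show "m \<notin> set a" using am by auto
    show "m \<notin> set b" using b by auto
    show "set a \<inter> set b = {}" using b unfolding Fs_def by auto
  qed
  also have "\<dots> = Fs a \<union> (insert m (Fs b \<inter> ({0..<m} - Fs a)))" using Fsb by auto
  finally have e: "Fs (a@m#b) = Fs a \<union> (insert m (Fs b \<inter> ({0..<m} - Fs a)))" .
  have fa: "finite (Fs a)" using Fsa finite_subset by blast
  have fb: "finite (Fs b \<inter> ({0..<m} - Fs a))" by auto
  have "card (Fs (a@m#b)) = card (Fs a) + card (insert m (Fs b \<inter> ({0..<m} - Fs a)))"
    unfolding e using Fsa by (intro card_Un_disjoint fa) auto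
  also have "\<dots> = card (Fs a) + 1 + card (Fs b \<inter> ({0..<m} - Fs a))" using fb by simp
  finally show ?thesis using forb_Fs[OF av] by simp
qed



lemma K:
  assumes a: "avoids_010_110 a" and am: "\<forall>v\<in>set a. v < m" and fi: "card (Fs a) < f"
  shows "card {b. length b = L \<and> set b \<subseteq> {0..m} \<and> avoids_010_110 (a@m#b) \<and> forb (a@m#b) = f}
    = jcount L (m - card (Fs a)) (f - card (Fs a) - 1) +
      (if f = m + 1 then 1 else 0) * (\<Sum>q<L. kcount q (m - card (Fs a)))"
proof -
  define i where "i = card (Fs a)"
  define A where "A = {0..<m} - Fs a"
  define Suf where "Suf = {b. length b = L \<and> set b \<subseteq> {0..m} \<and> avoids_010_110 (a@m#b) \<and> forb (a@m#b) = f}"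
  define B1 where "B1 = {b. length b = L \<and> set b \<subseteq> A \<and> avoids_010_110 b \<and> card (Fs b \<inter> A) = f - i - 1}"
  define K where "K = (\<lambda>q. {b. length b = q \<and> set b \<subseteq> A \<and> avoids_010_110 b})"
  define g where "g = (\<lambda>(q::nat, b1). b1 @ m # replicate (L - q - 1) m)"
  have Fsa: "Fs a \<subseteq> {0..<m}" using am Rep_lt[OF am] unfolding Fs_def by auto
  have finA: "finite A" unfolding A_def by simp
  have cardA: "card A = m - i" unfolding A_def i_def using Fsa
    by (simp add: card_Diff_subset finite_subset)
  have Am: "A \<subseteq> {0..<m}" unfolding A_def by auto
  have finS: "finite Suf"
    by (rule finite_subset[OF _ finite_lists_length_eq[of "{0..m}" L]]) (auto simp: Suf_def)
  have e1: "{b\<in>Suf. m \<notin> set b} = B1"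
  proof (intro set_eqI iffI)
    fix b assume "b \<in> {b\<in>Suf. m \<notin> set b}"
    then have b: "length b = L" "set b \<subseteq> {0..m}" "avoids_010_110 (a@m#b)" "forb (a@m#b) = f" "m \<notin> set b"
      unfolding Suf_def by auto
    have c: "set b \<subseteq> A" "avoids_010_110 b" using char1[OF a am b(2,5)] b(3) unfolding A_def by auto
    have "forb (a@m#b) = i + 1 + card (Fs b \<inter> A)"
      using forb_concat[OF a am] c unfolding A_def i_def by auto
    then have "card (Fs b \<inter> A) = f - i - 1" using b(4) by simp
    then show "b \<in> B1" unfolding B1_def using b c by auto
  next
    fix b assume "b \<in> B1"
    then have b: "length b = L" "set b \<subseteq> A" "avoids_010_110 b" "card (Fs b \<inter> A) = f - i - 1"
      unfolding B1_def by auto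
    have bb: "set b \<subseteq> {0..m}" "m \<notin> set b" using b(2) Am by auto
    have av: "avoids_010_110 (a@m#b)" using char1[OF a am bb] b(2,3) unfolding A_def by auto
    have "forb (a@m#b) = i + 1 + card (Fs b \<inter> A)"
      using forb_concat[OF a am] b unfolding A_def i_def by auto
    then have "forb (a@m#b) = f" using b(4) fi unfolding i_def by simp
    then show "b \<in> {b\<in>Suf. m \<notin> set b}" unfolding Suf_def using b bb av by auto
  qed
  have e2: "{b\<in>Suf. m \<in> set b} = (if f = m + 1 then g ` (SIGMA q:{..<L}. K q) else {})"
  proof (intro set_eqI iffI)
    fix b assume "b \<in> {b\<in>Suf. m \<in> set b}"
    then have b: "length b = L" "set b \<subseteq> {0..m}" "avoids_010_110 (a@m#b)" "forb (a@m#b) = f" "m \<in> set b"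
      unfolding Suf_def by auto
    define b1 where "b1 = takeWhile (\<lambda>x. x \<noteq> m) b"
    have dn: "dropWhile (\<lambda>x. x \<noteq> m) b \<noteq> []" using b(5) by simp
    have hd: "hd (dropWhile (\<lambda>x. x \<noteq> m) b) = m" using hd_dropWhile[OF dn] by simp
    obtain c where c: "dropWhile (\<lambda>x. x \<noteq> m) b = m # c" using dn hd by (cases "dropWhile (\<lambda>x. x \<noteq> m) b") auto
    have bsplit: "b = b1 @ m # c" unfolding b1_def using takeWhile_dropWhile_id[of "\<lambda>x. x \<noteq> m" b] c by simp
    have mb1: "m \<notin> set b1" unfolding b1_def by (auto dest: set_takeWhileD)
    have sb1: "set b1 \<subseteq> {0..m}" using b(2) bsplit by auto
    have av: "avoids_010_110 (a @ m # b1 @ m # c)" using b(3) bsplit by simp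
    have cm: "\<forall>v\<in>set c. v = m"
    proof
      fix v assume v: "v \<in> set c"
      have "v \<le> m" using v b(2) bsplit by auto
      moreover have "\<not> v < m" using avoids_two_M[OF av v] by blast
      ultimately show "v = m" by simp
    qed
    have crep: "c = replicate (L - length b1 - 1) m"
    proof -
      have "L - length b1 - 1 = length c" using b(1) bsplit by simp
      then show ?thesis using replicate_length_same[OF cm] by simp
    qed
    have qL: "length b1 < L" using b(1) bsplit by simp
    have av1: "avoids_010_110 (a@m#b1)" using avoids_appendD1[of "a@m#b1" "m#c"] av by simp
    have k1: "set b1 \<subseteq> A" "avoids_010_110 b1" using char1[OF a am sb1 mb1] av1 unfolding A_def by auto
    have le: "\<forall>v\<in>set (a @ m # b1 @ m # c). v \<le> m" using am b(2) bsplit by auto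
    have "forb (a@m#b) = m + 1" using forb_Fs[OF b(3)] Fs_full[OF le] bsplit by simp
    then have f: "f = m + 1" using b(4) by simp
    have "(length b1, b1) \<in> (SIGMA q:{..<L}. K q)" using qL k1 unfolding K_def by auto
    moreover have "b = g (length b1, b1)" unfolding g_def using bsplit crep by simp
    ultimately show "b \<in> (if f = m + 1 then g ` (SIGMA q:{..<L}. K q) else {})" using f by auto
  next
    fix b assume h: "b \<in> (if f = m + 1 then g ` (SIGMA q:{..<L}. K q) else {})"
    then have f: "f = m + 1" by (auto split: if_splits)
    from h f obtain q b1 where q: "q < L" "b1 \<in> K q" and bdef: "b = g (q, b1)" by auto
    have k1: "length b1 = q" "set b1 \<subseteq> A" "avoids_010_110 b1" using q unfolding K_def by auto
    have sb1: "set b1 \<subseteq> {0..m}" "m \<notin> set b1" using k1 Am by auto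
    have av1: "avoids_010_110 (a@m#b1)" using char1[OF a am sb1] k1 unfolding A_def by auto
    have bb: "b = b1 @ m # replicate (L - q - 1) m" using bdef unfolding g_def by simp
    have le: "\<forall>v\<in>set (a @ m # b1). v \<le> m" using am sb1 by auto
    have "avoids_010_110 ((a@m#b1) @ replicate (Suc (L - q - 1)) m)" by (rule avoids_rep[OF av1 le])
    then have av: "avoids_010_110 (a@m#b)" unfolding bb by simp
    have le2: "\<forall>v\<in>set (a @ m # b1 @ m # replicate (L - q - 1) m). v \<le> m" using le by auto
    have "forb (a@m#b) = m + 1" using forb_Fs[OF av] Fs_full[OF le2] bb by simp
    moreover have "length b = L" using bb k1 q by simp
    moreover have "set b \<subseteq> {0..m}" using bb sb1 by auto
    ultimately show "b \<in> {b\<in>Suf. m \<in> set b}" unfolding Suf_def using av f bb by auto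
  qed
  have un: "Suf = {b\<in>Suf. m \<notin> set b} \<union> {b\<in>Suf. m \<in> set b}" by auto
  have cS: "card Suf = card B1 + card {b\<in>Suf. m \<in> set b}"
    by (subst un, subst card_Un_disjoint) (use finS e1 in auto)
  have c1: "card B1 = jcount L (m - i) (f - i - 1)"
    using relabel(1)[OF finA, of L "f - i - 1"] unfolding B1_def cardA .
  have injg: "inj_on g (SIGMA q:{..<L}. K q)"
  proof (rule inj_onI)
    fix x y assume x: "x \<in> (SIGMA q:{..<L}. K q)" and y: "y \<in> (SIGMA q:{..<L}. K q)" and e: "g x = g y"
    obtain q b1 where xq: "x = (q, b1)" "b1 \<in> K q" using x by auto
    obtain q' b1' where yq: "y = (q', b1')" "b1' \<in> K q'" using y by auto
    have m1: "m \<notin> set b1" "m \<notin> set b1'" using xq yq Am unfolding K_def by auto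
    have a1: "\<forall>x\<in>set b1. x \<noteq> m" "\<forall>x\<in>set b1'. x \<noteq> m" using m1 by blast+
    have "takeWhile (\<lambda>x. x \<noteq> m) (g x) = b1" using a1 unfolding xq g_def by (simp add: takeWhile_append)
    moreover have "takeWhile (\<lambda>x. x \<noteq> m) (g y) = b1'" using a1 unfolding yq g_def by (simp add: takeWhile_append)
    ultimately have "b1 = b1'" using e by simp
    moreover then have "q = q'" using xq yq unfolding K_def by simp
    ultimately show "x = y" using xq yq by simp
  qed
  have finK: "finite (K q)" for q
    by (rule finite_subset[OF _ finite_lists_length_eq[OF finA, of q]]) (auto simp: K_def)
  have c2: "card {b\<in>Suf. m \<in> set b} = (if f = m + 1 then 1 else 0) * (\<Sum>q<L. kcount q (m - i))"
  proof (cases "f = m + 1")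
    case True
    have "card {b\<in>Suf. m \<in> set b} = card (SIGMA q:{..<L}. K q)"
      unfolding e2 using True card_image[OF injg] by simp
    also have "\<dots> = (\<Sum>q<L. card (K q))" using finK by simp
    also have "\<dots> = (\<Sum>q<L. kcount q (m - i))"
      using relabel(2)[OF finA] unfolding K_def cardA by simp
    finally show ?thesis using True by simp
  next
    case False then show ?thesis unfolding e2 by simp
  qed
  show ?thesis using cS c1 c2 unfolding Suf_def i_def by simp
qed



lemma Max_lt_set: "a \<noteq> [] \<Longrightarrow> Max (set a) < (m::nat) \<Longrightarrow> \<forall>v\<in>set a. v < m"
  by (meson List.finite_set Max_ge order_le_less_trans)

theorem mainTheorem13:
  fixes n m f :: nat
  assumes "n \<ge> 1" and "m \<ge> 1"
  shows "lcount n m f =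
    (\<Sum>p = m + 1..n. \<Sum>i < f. \<Sum>j < m.
       lcount (p - 1) j i *
       (jcount (n - p) (m - i) (f - i - 1) +
        (if f = m + 1 then 1 else 0) * (\<Sum>q < n - p. kcount q (m - i))))"
proof -
  define G where "G = (\<lambda>p i. jcount (n - p) (m - i) (f - i - 1) +
        (if f = m + 1 then 1 else 0) * (\<Sum>q < n - p. kcount q (m - i)))"
  define S where "S = {s. is_inv_seq n s \<and> avoids_010_110 s \<and> s \<noteq> [] \<and> Max (set s) = m \<and> forb s = f}"
  define Pre where "Pre = (\<lambda>p. {a. is_inv_seq (p - 1) a \<and> avoids_010_110 a \<and> a \<noteq> [] \<and> Max (set a) < m \<and> forb a < f})"
  define Suf where "Suf = (\<lambda>p a. {b. length b = n - p \<and> set b \<subseteq> {0..m} \<and> avoids_010_110 (a@m#b) \<and> forb (a@m#b) = f})"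
  define T where "T = (SIGMA p:{m+1..n}. SIGMA a:Pre p. Suf p a)"
  define h where "h = (\<lambda>(p::nat, a::nat list, b::nat list). a @ m # b)"
  have finPre: "finite (Pre p)" for p
  proof (rule finite_subset[OF _ finite_lists_length_eq[of "{0..m}" "p - 1"]])
    show "Pre p \<subseteq> {xs. set xs \<subseteq> {0..m} \<and> length xs = p - 1}"
      unfolding Pre_def is_inv_seq_def using Max_lt_set by fastforce
  qed simp
  have finSuf: "finite (Suf p a)" for p a
    by (rule finite_subset[OF _ finite_lists_length_eq[of "{0..m}" "n - p"]]) (auto simp: Suf_def)
  have SeqT: "S = h ` T"
  proof (intro set_eqI iffI)
    fix s assume "s \<in> S"
    then have s: "is_inv_seq n s" "avoids_010_110 s" "s \<noteq> []" "Max (set s) = m" "forb s = f"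
      unfolding S_def by auto
    have ms: "m \<in> set s" using s(3,4) Max_in by (metis List.finite_set set_empty)
    have sle: "\<forall>v\<in>set s. v \<le> m" using s(4) by auto
    define a where "a = takeWhile (\<lambda>x. x \<noteq> m) s"
    have dn: "dropWhile (\<lambda>x. x \<noteq> m) s \<noteq> []" using ms by simp
    have hd: "hd (dropWhile (\<lambda>x. x \<noteq> m) s) = m" using hd_dropWhile[OF dn] by simp
    obtain b where b: "dropWhile (\<lambda>x. x \<noteq> m) s = m # b" using dn hd by (cases "dropWhile (\<lambda>x. x \<noteq> m) s") auto
    have ssplit: "s = a @ m # b" unfolding a_def using takeWhile_dropWhile_id[of "\<lambda>x. x \<noteq> m" s] b by simp
    have ma: "m \<notin> set a" unfolding a_def by (auto dest: set_takeWhileD)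
    define p where "p = length a + 1"
    have len: "length s = n" using s(1) unfolding is_inv_seq_def by simp
    have "length a < n" using len ssplit by simp
    then have "s ! length a < length a + 1" using s(1) unfolding is_inv_seq_def by blast
    then have mla: "m \<le> length a" using ssplit by (simp add: nth_append)
    have pr: "p \<in> {m+1..n}" unfolding p_def using mla len ssplit by auto
    have ane: "a \<noteq> []" using mla assms(2) by auto
    have inva: "is_inv_seq (p - 1) a" unfolding is_inv_seq_def p_def
    proof (intro conjI allI impI)
      fix i assume i: "i < length a + 1 - 1"
      then have "s ! i < i + 1" using s(1) len ssplit unfolding is_inv_seq_def by auto
      then show "a ! i < i + 1" using i ssplit by (simp add: nth_append)
    qed simp
    have ava: "avoids_010_110 a" using avoids_appendD1[of a "m#b"] s(2) ssplit by simp
    have alt: "\<forall>v\<in>set a. v < m"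
    proof
      fix v assume v: "v \<in> set a"
      then have "v \<le> m" using sle ssplit by simp
      moreover have "v \<noteq> m" using v ma by blast
      ultimately show "v < m" by simp
    qed
    have Maxa: "Max (set a) < m" using alt ane by simp
    have forba: "forb a < f"
    proof -
      have "Fs a \<subseteq> Fs s" using Fs_mono[of a "m#b"] ssplit by simp
      moreover have "m \<in> Fs s" using ms unfolding Fs_def by simp
      moreover have "m \<notin> Fs a" using Fs_sub[OF ane] Maxa by auto
      moreover have "finite (Fs s)" using Fs_sub[OF s(3)] finite_subset by blast
      ultimately have "card (Fs a) < card (Fs s)" by (intro psubset_card_mono) auto
      then show ?thesis using forb_Fs[OF ava] forb_Fs[OF s(2)] s(5) by simp
    qed
    have "a \<in> Pre p" unfolding Pre_def using inva ava ane Maxa forba by simp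
    moreover have "b \<in> Suf p a" unfolding Suf_def using len ssplit sle s(2,5) p_def by auto
    ultimately have "(p, a, b) \<in> T" unfolding T_def using pr by simp
    moreover have "s = h (p, a, b)" unfolding h_def using ssplit by simp
    ultimately show "s \<in> h ` T" by blast
  next
    fix s assume "s \<in> h ` T"
    then obtain p a b where p: "p \<in> {m+1..n}" and a: "a \<in> Pre p" and b: "b \<in> Suf p a" and sdef: "s = a @ m # b"
      unfolding T_def h_def by auto
    have a': "is_inv_seq (p - 1) a" "avoids_010_110 a" "a \<noteq> []" "Max (set a) < m" "forb a < f"
      using a unfolding Pre_def by auto
    have b': "length b = n - p" "set b \<subseteq> {0..m}" "avoids_010_110 (a@m#b)" "forb (a@m#b) = f"
      using b unfolding Suf_def by auto
    have la: "length a = p - 1" using a'(1) unfolding is_inv_seq_def by simp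
    have alt: "\<forall>v\<in>set a. v < m" using Max_lt_set a'(3,4) by blast
    have inv: "is_inv_seq n s" unfolding is_inv_seq_def
    proof (intro conjI allI impI)
      show "length s = n" using sdef la b'(1) p by auto
      fix i assume i: "i < n"
      consider "i < length a" | "i = length a" | "i > length a" by linarith
      then show "s ! i < i + 1"
      proof cases
        case 1 then show ?thesis using a'(1) la sdef unfolding is_inv_seq_def by (auto simp: nth_append)
      next
        case 2 then show ?thesis using la p sdef by (auto simp: nth_append)
      next
        case 3
        then have "s ! i = b ! (i - length a - 1)" using sdef by (auto simp: nth_append nth_Cons')
        moreover have "i - length a - 1 < length b" using 3 i la b'(1) p by auto
        ultimately have "s ! i \<le> m" using b'(2) nth_mem by fastforce
        then show ?thesis using 3 la p by auto
      qed
    qed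
    have "Max (set s) = m" using alt b'(2) sdef by (intro Max_eqI) auto
    then show "s \<in> S" unfolding S_def using inv b' sdef by auto
  qed
  have injh: "inj_on h T"
  proof (rule inj_onI)
    fix x y assume x: "x \<in> T" and y: "y \<in> T" and e: "h x = h y"
    obtain p a b where xp: "x = (p, a, b)" "p \<in> {m+1..n}" "a \<in> Pre p" using x unfolding T_def by auto
    obtain p' a' b' where yp: "y = (p', a', b')" "p' \<in> {m+1..n}" "a' \<in> Pre p'" using y unfolding T_def by auto
    have ma: "\<forall>v\<in>set a. v \<noteq> m" "\<forall>v\<in>set a'. v \<noteq> m"
      using xp yp Max_lt_set unfolding Pre_def by fastforce+
    have "takeWhile (\<lambda>x. x \<noteq> m) (h x) = a" using ma unfolding xp h_def by (simp add: takeWhile_append)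
    moreover have "takeWhile (\<lambda>x. x \<noteq> m) (h y) = a'" using ma unfolding yp h_def by (simp add: takeWhile_append)
    ultimately have aa: "a = a'" using e by simp
    then have bb: "b = b'" using e unfolding xp yp h_def by simp
    have "length a = p - 1" "length a' = p' - 1" using xp yp unfolding Pre_def is_inv_seq_def by auto
    then have "p = p'" using aa xp yp by auto
    then show "x = y" using aa bb xp yp by simp
  qed
  have cardT: "card T = (\<Sum>p = m + 1..n. \<Sum>a\<in>Pre p. card (Suf p a))"
    unfolding T_def using finPre finSuf by (simp add: card_SigmaI finite_SigmaI)
  have cardSuf: "card (Suf p a) = G p (forb a)" if "a \<in> Pre p" for p a
  proof -
    have a': "avoids_010_110 a" "a \<noteq> []" "Max (set a) < m" "forb a < f"
      using that unfolding Pre_def by auto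
    have alt: "\<forall>v\<in>set a. v < m" using Max_lt_set a'(2,3) by blast
    have fa: "forb a = card (Fs a)" using forb_Fs[OF a'(1)] .
    show ?thesis unfolding Suf_def G_def fa using K[OF a'(1) alt] a'(4) fa by simp
  qed
  have grp: "(\<Sum>a\<in>Pre p. G p (forb a)) = (\<Sum>i<f. \<Sum>j<m. lcount (p - 1) j i * G p i)" for p
  proof -
    have one: "(\<Sum>i<f. \<Sum>j<m. if i = forb a \<and> j = Max (set a) then G p i else 0) = G p (forb a)"
      if "a \<in> Pre p" for a
    proof -
      have lt: "forb a < f" "Max (set a) < m" using that unfolding Pre_def by auto
      have "(\<Sum>j<m. if i = forb a \<and> j = Max (set a) then G p i else 0) = (if i = forb a then G p i else 0)" for i
        by (cases "i = forb a") (simp_all add: lt)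
      then show ?thesis using lt by simp
    qed
    have "(\<Sum>a\<in>Pre p. G p (forb a)) = (\<Sum>a\<in>Pre p. \<Sum>i<f. \<Sum>j<m. if i = forb a \<and> j = Max (set a) then G p i else 0)"
      using one by simp
    also have "\<dots> = (\<Sum>i<f. \<Sum>j<m. \<Sum>a\<in>Pre p. if i = forb a \<and> j = Max (set a) then G p i else 0)"
      by (subst sum.swap) (subst sum.swap, simp)
    also have "\<dots> = (\<Sum>i<f. \<Sum>j<m. lcount (p - 1) j i * G p i)"
    proof (intro sum.cong refl)
      fix i j assume i: "i \<in> {..<f}" and j: "j \<in> {..<m}"
      have "(\<Sum>a\<in>Pre p. if i = forb a \<and> j = Max (set a) then G p i else 0) = (\<Sum>a\<in>{a\<in>Pre p. i = forb a \<and> j = Max (set a)}. G p i)"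
        by (subst sum.inter_filter[OF finPre]) simp
      also have "\<dots> = card {a\<in>Pre p. i = forb a \<and> j = Max (set a)} * G p i" by (simp only: sum_constant of_nat_id)
      also have "{a\<in>Pre p. i = forb a \<and> j = Max (set a)} = {s. is_inv_seq (p - 1) s \<and> avoids_010_110 s \<and> s \<noteq> [] \<and> Max (set s) = j \<and> forb s = i}"
        unfolding Pre_def using i j by auto
      finally show "(\<Sum>a\<in>Pre p. if i = forb a \<and> j = Max (set a) then G p i else 0) = lcount (p - 1) j i * G p i"
        unfolding lcount_def .
    qed
    finally show ?thesis .
  qed
  have "lcount n m f = card S" unfolding lcount_def S_def ..
  also have "\<dots> = card T" unfolding SeqT by (rule card_image[OF injh])
  also have "\<dots> = (\<Sum>p = m + 1..n. \<Sum>a\<in>Pre p. G p (forb a))" unfolding cardT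
    by (intro sum.cong refl) (simp add: cardSuf)
  also have "\<dots> = (\<Sum>p = m + 1..n. \<Sum>i<f. \<Sum>j<m. lcount (p - 1) j i * G p i)" using grp by simp
  finally show ?thesis unfolding G_def .
qed


end
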